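(* Let $\mathcal{H}$ be a real Hilbert space of dimension $d>1$, $T\ge1$ an integer, $G>0$, $\mathcal{G}=\{g\in\mathcal{H}:\|g\|\le G\}$, $W>0$, $p\in[1,2]$, $f(x)=\frac{W}{p}|x|^p$ and $B(\theta)=f(\|\theta\|)$. Define $f_t(x)=\frac{W}{p}\big(x^2+(T-t)G^2\big)^{p/2}$. Then $f_t(\|\theta\|)$ is the conditional value $V_t(\theta)$ of the game, and the minimax optimal strategy is \[ w_{t+1}=\nabla V_t(\theta_t)=\theta_t\,\frac{f'\big(\sqrt{\|\theta_t\|^2+G^2(T-t)}\big)}{\sqrt{\|\theta_t\|^2+G^2(T-t)}}. \] If $p\in(1,2]$, letting $q\ge2$ with $1/p+1/q=1$, this strategy guarantees, for every sequence $g_1,\dots,g_T\in\mathcal{G}$ and every $u\in\mathcal{H}$, \[ \operatorname{Regret}(u)\ \le\ \frac{1}{W^{q-1}q}\|u\|^q+\frac{W}{p}\big(G\sqrt{T}\big)^p\ \le\ \Big(\frac1p+\frac1q\|u\|^q\Big)G\sqrt{T}, \] where the second inequality holds when $W=(G\sqrt{T})^{1-p}$. For all $u$, the bound $\big(\frac1p+\frac1q\|u\|^q\big)G\sqrt{T}$ is minimized (over $p\in(1,2]$) by taking $p=2$. For $p=1$, for all $u$ with $\|u\|\le W$, $\operatorname{Regret}(u)\le WG\sqrt{T}$.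
   Context: Online linear optimization game with known horizon $T$: on rounds $t=1,\dots,T$ the player chooses $w_t\in\mathcal{H}$, the adversary chooses $g_t\in\mathcal{G}$, the player suffers $\langle w_t,g_t\rangle$. Let $\theta_t=-\sum_{s=1}^t g_s$ ($\theta_0=0$). $\operatorname{Regret}(u)=\sum_{t=1}^T\langle g_t,w_t-u\rangle$. The conditional value of the game is $V_T(\theta)=B(\theta)$ and $V_t(\theta)=\min_{w\in\mathcal{H}}\max_{g\in\mathcal{G}}\big(\langle g,w\rangle+V_{t+1}(\theta-g)\big)$ for $t=T-1,\dots,0$. *)

theory Defs
  imports "HOL-Analysis.Analysis"
begin

text \<open>Conditional value of the online linear optimization game.
  cv B Gs k theta is the value with k rounds remaining; min/max are rendered as Inf/Sup.
  cv B Gs 0 theta = B theta, and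
  cv B Gs (Suc k) theta = min over w of max over g in Gs of (inner g w + cv B Gs k (theta - g)).\<close>
primrec cv :: "('a::real_inner \<Rightarrow> real) \<Rightarrow> 'a set \<Rightarrow> nat \<Rightarrow> 'a \<Rightarrow> real" where
  "cv B Gs 0 \<theta> = B \<theta>"
| "cv B Gs (Suc k) \<theta> = (INF w. SUP g\<in>Gs. inner g w + cv B Gs k (\<theta> - g))"

text \<open>V_t(theta) for a game of horizon T (meaningful for t <= T).\<close>
definition cond_value :: "('a::real_inner \<Rightarrow> real) \<Rightarrow> 'a set \<Rightarrow> nat \<Rightarrow> nat \<Rightarrow> 'a \<Rightarrow> real" where
  "cond_value B Gs T t \<theta> = cv B Gs (T - t) \<theta>"

definition theta :: "(nat \<Rightarrow> 'a::real_vector) \<Rightarrow> nat \<Rightarrow> 'a" where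
  "theta g t = - (\<Sum>s=1..t. g s)"

definition regret :: "nat \<Rightarrow> (nat \<Rightarrow> 'a::real_inner) \<Rightarrow> (nat \<Rightarrow> 'a) \<Rightarrow> 'a \<Rightarrow> real" where
  "regret T g w u = (\<Sum>t=1..T. inner (g t) (w t - u))"

end

theory Submission
  imports Defs
begin

lemma tangent_powr:
  fixes x y r :: real
  assumes "0 \<le> r" "r \<le> 1" "x > 0" "y \<ge> 0"
  shows "y powr r \<le> x powr r + r * x powr (r - 1) * (y - x)"
proof (cases "y = 0")
  case True
  have "x powr (r-1) * x = x powr r" using assms by (simp add: powr_diff field_simps)
  then show ?thesis using True assms by (simp add: algebra_simps)
next
  case False
  then have y: "y > 0" using assms by simp
  have "y powr r * x powr (1 - r) \<le> r * y + (1 - r) * x"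
    using Youngs_inequality_0[of r "1-r" y x] assms y by simp
  hence "y powr r * x powr (1 - r) * x powr (r - 1) \<le> (r * y + (1 - r) * x) * x powr (r - 1)"
    by (rule mult_right_mono) simp
  moreover have "x powr (1 - r) * x powr (r - 1) = 1" using assms by (simp flip: powr_add)
  moreover have "x powr (r - 1) * x = x powr r" using assms by (simp add: powr_diff field_simps)
  ultimately show ?thesis by (simp add: algebra_simps)
qed

lemma orth_exists:
  fixes \<theta> :: "'a::real_inner"
  assumes "\<exists>x y::'a. independent {x, y} \<and> x \<noteq> y"
  shows "\<exists>z. z \<noteq> 0 \<and> inner z \<theta> = 0"
proof -
  obtain x y :: 'a where ind: "independent {x, y}" and xy: "x \<noteq> y" using assms by blast
  have xs: "x \<notin> span {y}" and yi: "independent {y}"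
    using ind xy by (auto simp: independent_insert)
  have y0: "y \<noteq> 0" using yi by auto
  have x0: "x \<noteq> 0" using xs by (metis span_zero)
  show ?thesis
  proof (cases "inner y \<theta> = 0 \<and> inner x \<theta> = 0")
    case True then show ?thesis using x0 by blast
  next
    case False
    define z where "z = inner y \<theta> *\<^sub>R x - inner x \<theta> *\<^sub>R y"
    have "inner z \<theta> = 0" by (simp add: z_def inner_diff_left algebra_simps)
    moreover have "z \<noteq> 0"
    proof
      assume z: "z = 0"
      show False
      proof (cases "inner y \<theta> = 0")
        case True
        then have "inner x \<theta> \<noteq> 0" using False by simp
        then show False using z True y0 by (simp add: z_def)
      next
        case False
        have "x = (inner x \<theta> / inner y \<theta>) *\<^sub>R y"
          using z False by (simp add: z_def field_simps) (metis (no_types, lifting) eq_vector_fraction_iff)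
        then have "x \<in> span {y}" by (metis span_base span_scale singletonI)
        then show False using xs by simp
      qed
    qed
    ultimately show ?thesis by blast
  qed
qed

lemma step_upper:
  fixes \<theta> g :: "'a::real_inner" and W p G c :: real
  assumes p: "1 \<le> p" "p \<le> 2" and W: "W > 0" and G: "G > 0" and c: "c \<ge> 0" and g: "norm g \<le> G"
  shows "inner g ((W * ((norm \<theta>)\<^sup>2 + G\<^sup>2 + c) powr ((p-2)/2)) *\<^sub>R \<theta>)
     + W/p*((norm(\<theta>-g))\<^sup>2 + c) powr (p/2) \<le> W/p * ((norm \<theta>)\<^sup>2 + G\<^sup>2 + c) powr (p/2)"
proof -
  define X where "X = (norm \<theta>)\<^sup>2 + G\<^sup>2 + c"
  define \<sigma> where "\<sigma> = inner g \<theta>"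
  have X0: "X > 0" using G c by (simp add: X_def add_nonneg_pos add_pos_nonneg)
  have ng: "(norm(\<theta>-g))\<^sup>2 = (norm \<theta>)\<^sup>2 - 2*\<sigma> + (norm g)\<^sup>2"
    by (simp add: power2_norm_eq_inner inner_diff_left inner_diff_right inner_commute \<sigma>_def)
  have gg: "(norm g)\<^sup>2 \<le> G\<^sup>2" using g by (simp add: power_mono)
  have Y: "(norm(\<theta>-g))\<^sup>2 + c \<le> X - 2*\<sigma>" using ng gg by (simp add: X_def)
  have Y0: "0 \<le> (norm(\<theta>-g))\<^sup>2 + c" using c by simp
  have "((norm(\<theta>-g))\<^sup>2 + c) powr (p/2) \<le> (X - 2*\<sigma>) powr (p/2)"
    using Y Y0 p by (intro powr_mono2) auto
  also have "\<dots> \<le> X powr (p/2) + (p/2) * X powr (p/2 - 1) * ((X - 2*\<sigma>) - X)"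
    using p X0 Y Y0 by (intro tangent_powr) auto
  finally have A: "((norm(\<theta>-g))\<^sup>2 + c) powr (p/2) \<le> X powr (p/2) - p * X powr (p/2 - 1) * \<sigma>"
    by (simp add: algebra_simps)
  have "W/p * ((norm(\<theta>-g))\<^sup>2 + c) powr (p/2) \<le> W/p * (X powr (p/2) - p * X powr (p/2 - 1) * \<sigma>)"
    using A W p by (intro mult_left_mono) auto
  also have "\<dots> = W/p * X powr (p/2) - W * X powr ((p-2)/2) * \<sigma>"
  proof -
    have e: "(p-2)/2 = p/2 - 1" by simp
    have "W/p * (p * X powr (p/2 - 1) * \<sigma>) = W * X powr (p/2 - 1) * \<sigma>" using p by simp
    then show ?thesis unfolding e by (simp add: right_diff_distrib)
  qed
  finally show ?thesis by (simp add: X_def[symmetric] \<sigma>_def inner_commute)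
qed

lemma step_lower:
  fixes \<theta> w :: "'a::real_inner" and W p G c :: real
  assumes p: "1 \<le> p" and W: "W > 0" and G: "G > 0"
    and dim: "\<exists>x y::'a. independent {x, y} \<and> x \<noteq> y"
  shows "\<exists>g. norm g \<le> G \<and> W/p * ((norm \<theta>)\<^sup>2 + G\<^sup>2 + c) powr (p/2) \<le>
      inner g w + W/p*((norm(\<theta>-g))\<^sup>2 + c) powr (p/2)"
proof -
  obtain z where z: "z \<noteq> 0" "inner z \<theta> = 0" using orth_exists[OF dim] by blast
  define g0 where "g0 = (G / norm z) *\<^sub>R z"
  have n0: "norm g0 = G" using z G by (simp add: g0_def)
  have o0: "inner g0 \<theta> = 0" using z by (simp add: g0_def)
  define g where "g = (if inner g0 w \<ge> 0 then g0 else - g0)"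
  have ng: "norm g = G" and og: "inner g \<theta> = 0" and wg: "inner g w \<ge> 0"
    using n0 o0 by (auto simp: g_def)
  have "(norm(\<theta>-g))\<^sup>2 = (norm \<theta>)\<^sup>2 + G\<^sup>2"
  proof -
    have "(norm(\<theta>-g))\<^sup>2 = (norm \<theta>)\<^sup>2 - 2*inner g \<theta> + (norm g)\<^sup>2"
      by (simp add: power2_norm_eq_inner inner_diff_left inner_diff_right inner_commute)
    then show ?thesis using ng og by simp
  qed
  then have "W/p * ((norm \<theta>)\<^sup>2 + G\<^sup>2 + c) powr (p/2) = W/p*((norm(\<theta>-g))\<^sup>2 + c) powr (p/2)"
    by simp
  then show ?thesis using ng wg by (intro exI[of _ g]) auto
qed

lemma sq_powr_half:
  fixes x p :: real assumes "x \<ge> 0" "p > 0"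
  shows "(x\<^sup>2) powr (p/2) = x powr p"
proof (cases "x = 0")
  case True then show ?thesis using assms by simp
next
  case False
  then have "x > 0" using assms by simp
  have h: "x powr 2 = x\<^sup>2" using assms by simp
  show ?thesis unfolding h[symmetric] powr_powr by simp
qed

lemma one_step:
  fixes h :: "'a::real_inner \<Rightarrow> real" and W p G c :: real
  assumes p: "1 \<le> p" "p \<le> 2" and W: "W > 0" and G: "G > 0" and c: "c \<ge> 0"
    and dim: "\<exists>x y::'a. independent {x, y} \<and> x \<noteq> y"
    and h: "\<And>\<theta>. h \<theta> = W/p*((norm \<theta>)\<^sup>2 + c) powr (p/2)"
  shows "(SUP g\<in>cball 0 G. inner g ((W * ((norm \<theta>)\<^sup>2 + G\<^sup>2 + c) powr ((p-2)/2)) *\<^sub>R \<theta>) + h (\<theta> - g))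
           = W/p * ((norm \<theta>)\<^sup>2 + G\<^sup>2 + c) powr (p/2)" (is "?S1 = ?V")
    and "(INF w. SUP g\<in>cball 0 G. inner g w + h (\<theta> - g)) = W/p * ((norm \<theta>)\<^sup>2 + G\<^sup>2 + c) powr (p/2)"
proof -
  define ws where "ws = (W * ((norm \<theta>)\<^sup>2 + G\<^sup>2 + c) powr ((p-2)/2)) *\<^sub>R \<theta>"
  define S where "S w = (SUP g\<in>cball 0 G. inner g w + h (\<theta> - g))" for w
  have up: "inner g ws + h (\<theta> - g) \<le> ?V" if "g \<in> cball 0 G" for g
    using step_upper[OF p W G c, of g \<theta>] that unfolding h ws_def by simp
  have ne: "cball (0::'a) G \<noteq> {}" using G by simp
  have bdd: "bdd_above ((\<lambda>g. inner g w + h (\<theta> - g)) ` cball 0 G)" for w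
  proof (rule bdd_aboveI2)
    fix g :: 'a assume g: "g \<in> cball 0 G"
    have "inner g (w - ws) \<le> norm g * norm (w - ws)" by (rule norm_cauchy_schwarz)
    also have "\<dots> \<le> G * norm (w - ws)" using g by (intro mult_right_mono) auto
    finally have "inner g w \<le> inner g ws + G * norm (w - ws)" by (simp add: inner_diff_right)
    then show "inner g w + h (\<theta> - g) \<le> ?V + G * norm (w - ws)" using up[OF g] by simp
  qed
  have low: "?V \<le> S w" for w
  proof -
    obtain g where g: "norm g \<le> G" "?V \<le> inner g w + W/p*((norm(\<theta>-g))\<^sup>2 + c) powr (p/2)"
      using step_lower[OF p(1) W G dim, of \<theta> c w] by blast
    show ?thesis unfolding S_def
      by (rule cSUP_upper2[OF bdd, of g]) (use g h in auto)
  qed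
  have S1: "S ws = ?V"
  proof (rule antisym)
    show "S ws \<le> ?V" unfolding S_def by (rule cSUP_least[OF ne]) (use up in auto)
  qed (rule low)
  then show "?S1 = ?V" by (simp add: S_def ws_def)
  have "(INF w. S w) = ?V"
  proof (rule antisym)
    show "(INF w. S w) \<le> ?V" using S1 by (metis bdd_belowI2 cINF_lower2 low order_refl UNIV_I)
    show "?V \<le> (INF w. S w)" by (rule cINF_greatest) (use low in auto)
  qed
  then show "(INF w. SUP g\<in>cball 0 G. inner g w + h (\<theta> - g)) = ?V" by (simp add: S_def)
qed

lemma cv_formula:
  fixes B :: "'a::real_inner \<Rightarrow> real" and W p G :: real
  assumes p: "1 \<le> p" "p \<le> 2" and W: "W > 0" and G: "G > 0"
    and dim: "\<exists>x y::'a. independent {x, y} \<and> x \<noteq> y"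
    and B: "\<And>\<theta>. B \<theta> = W/p * \<bar>norm \<theta>\<bar> powr p"
  shows "cv B (cball 0 G) k \<theta> = W/p*((norm \<theta>)\<^sup>2 + real k * G\<^sup>2) powr (p/2)"
proof (induction k arbitrary: \<theta>)
  case 0
  show ?case by (subst cv.simps) (use B p in \<open>simp add: sq_powr_half\<close>)
next
  case (Suc k)
  have "cv B (cball 0 G) (Suc k) \<theta> = (INF w. SUP g\<in>cball 0 G. inner g w + cv B (cball 0 G) k (\<theta> - g))"
    by simp
  also have "\<dots> = W/p * ((norm \<theta>)\<^sup>2 + G\<^sup>2 + real k * G\<^sup>2) powr (p/2)"
    by (rule one_step(2)[OF p W G _ dim]) (use Suc in auto)
  finally show ?case by (simp add: algebra_simps)
qed

lemma deriv_f:
  fixes W p y :: real assumes "p \<ge> 1" "y > 0"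
  shows "deriv (\<lambda>x. W/p * \<bar>x\<bar> powr p) y = W * y powr (p - 1)"
proof -
  have "((\<lambda>x. W/p * x powr p) has_real_derivative W/p * (p * y powr (p - 1))) (at y)"
    using assms by (intro DERIV_cmult has_real_derivative_powr) auto
  then have "((\<lambda>x. W/p * \<bar>x\<bar> powr p) has_real_derivative W/p * (p * y powr (p - 1))) (at y)"
    by (rule has_field_derivative_transform_within_open[of _ _ _ "{0<..}"]) (use assms in auto)
  then show ?thesis using assms by (simp add: DERIV_imp_deriv)
qed

lemma has_deriv_F:
  fixes \<theta> :: "'a::real_inner" and W p c :: real
  assumes "c > 0" "p \<ge> 1"
  shows "((\<lambda>\<theta>. W/p*((norm \<theta>)\<^sup>2 + c) powr (p/2)) has_derivative
     (\<lambda>h. inner ((W * ((norm \<theta>)\<^sup>2 + c) powr ((p-2)/2)) *\<^sub>R \<theta>) h)) (at \<theta>)"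
proof -
  define X where "X = (norm \<theta>)\<^sup>2 + c"
  have X0: "X > 0" using assms by (simp add: X_def add_nonneg_pos)
  have d1: "((\<lambda>x. inner x x + c) has_derivative (\<lambda>h. inner \<theta> h + inner h \<theta>)) (at \<theta>)"
    using has_derivative_inner[OF has_derivative_ident has_derivative_ident, of \<theta> UNIV]
    by (intro has_derivative_add_const)
  have d2: "DERIV (\<lambda>u. W/p * u powr (p/2)) (inner \<theta> \<theta> + c) :> W/p * ((p/2) * (inner \<theta> \<theta> + c) powr (p/2 - 1))"
    using X0 by (intro DERIV_cmult has_real_derivative_powr) (simp add: X_def power2_norm_eq_inner)
  have d3: "((\<lambda>x. W/p * (inner x x + c) powr (p/2)) has_derivative
      (\<lambda>h. (inner \<theta> h + inner h \<theta>) * (W/p * ((p/2) * (inner \<theta> \<theta> + c) powr (p/2 - 1))))) (at \<theta>)"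
    by (rule DERIV_compose_FDERIV[OF d2 d1])
  have e: "(\<lambda>h. (inner \<theta> h + inner h \<theta>) * (W/p * ((p/2) * (inner \<theta> \<theta> + c) powr (p/2 - 1))))
      = (\<lambda>h. inner ((W * ((norm \<theta>)\<^sup>2 + c) powr ((p-2)/2)) *\<^sub>R \<theta>) h)"
  proof
    fix h
    have pp: "(p-2)/2 = p/2 - 1" by simp
    have "(inner \<theta> h + inner h \<theta>) * (W/p * ((p/2) * X powr (p/2 - 1)))
        = (2 * inner \<theta> h) * ((W/p * (p/2)) * X powr (p/2 - 1))" by (simp add: inner_commute)
    also have "W/p * (p/2) = W/2" using assms by simp
    finally have "(inner \<theta> h + inner h \<theta>) * (W/p * ((p/2) * X powr (p/2 - 1)))
        = W * X powr (p/2 - 1) * inner \<theta> h" by simp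
    then show "(inner \<theta> h + inner h \<theta>) * (W/p * ((p/2) * (inner \<theta> \<theta> + c) powr (p/2 - 1)))
      = inner ((W * ((norm \<theta>)\<^sup>2 + c) powr ((p-2)/2)) *\<^sub>R \<theta>) h"
      unfolding pp X_def power2_norm_eq_inner by simp
  qed
  have fe: "(\<lambda>\<theta>. W/p*((norm \<theta>)\<^sup>2 + c) powr (p/2)) = (\<lambda>x. W/p * (inner x x + c) powr (p/2))"
    by (simp add: power2_norm_eq_inner)
  show ?thesis unfolding fe using d3 unfolding e .
qed

lemma theta_Suc: "theta g (Suc n) = theta g n - g (Suc n)"
  by (simp add: theta_def)

lemma theta_0: "theta g 0 = 0"
  by (simp add: theta_def)

lemma real_diff_Suc: "t < T \<Longrightarrow> real (T - t) = real (T - Suc t) + 1"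
  by (simp add: of_nat_diff)


lemma comb_ineq: "S \<le> A - B \<Longrightarrow> t + C \<le> B \<Longrightarrow> S + t \<le> A - (C::real)"
  by linarith

lemma telescope:
  fixes g :: "nat \<Rightarrow> 'a::real_inner" and wstar :: "nat \<Rightarrow> 'a \<Rightarrow> 'a" and W p G :: real
  assumes p: "1 \<le> p" "p \<le> 2" and W: "W > 0" and G: "G > 0"
    and gG: "\<forall>t\<in>{1..T}. norm (g t) \<le> G"
    and ws: "\<And>t \<theta>. t < T \<Longrightarrow> wstar t \<theta> = (W*((norm \<theta>)\<^sup>2+G\<^sup>2+real(T-Suc t)*G\<^sup>2) powr ((p-2)/2)) *\<^sub>R \<theta>"
  shows "n \<le> T \<Longrightarrow> (\<Sum>t=1..n. inner (g t) (wstar (t-1) (theta g (t-1))))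
     \<le> W/p*((norm (0::'a))\<^sup>2+real T*G\<^sup>2) powr (p/2) - W/p*((norm (theta g n))\<^sup>2+real (T-n)*G\<^sup>2) powr (p/2)"
proof (induction n)
  case 0
  then show ?case by (simp add: theta_0)
next
  case (Suc n)
  define th where "th = theta g n"
  define c where "c = real (T - Suc n) * G\<^sup>2"
  have n: "n < T" using Suc by simp
  have gn: "norm (g (Suc n)) \<le> G" using gG Suc by auto
  have st: "inner (g (Suc n)) (wstar n th) + W/p*((norm(th - g (Suc n)))\<^sup>2 + c) powr (p/2)
      \<le> W/p * ((norm th)\<^sup>2 + G\<^sup>2 + c) powr (p/2)"
    using step_upper[OF p W G _ gn, of c th] ws[OF n, of th] G by (simp add: c_def)
  have e: "(norm th)\<^sup>2 + G\<^sup>2 + c = (norm th)\<^sup>2 + real (T - n) * G\<^sup>2"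
    using real_diff_Suc[OF n] by (simp add: c_def algebra_simps)
  have sumeq: "(\<Sum>t=1..Suc n. inner (g t) (wstar (t-1) (theta g (t-1))))
      = (\<Sum>t=1..n. inner (g t) (wstar (t-1) (theta g (t-1)))) + inner (g (Suc n)) (wstar n th)"
    by (simp add: th_def)
  have theq: "theta g (Suc n) = th - g (Suc n)" by (simp add: theta_Suc th_def)
  have IH: "(\<Sum>t=1..n. inner (g t) (wstar (t-1) (theta g (t-1))))
     \<le> W/p*((norm (0::'a))\<^sup>2+real T*G\<^sup>2) powr (p/2) - W/p*((norm th)\<^sup>2+real (T-n)*G\<^sup>2) powr (p/2)"
    using Suc.IH[OF Suc_leD[OF Suc.prems]] unfolding th_def .
  have st2: "inner (g (Suc n)) (wstar n th) + W/p*((norm(th - g (Suc n)))\<^sup>2 + real (T - Suc n) * G\<^sup>2) powr (p/2)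
      \<le> W/p * ((norm th)\<^sup>2 + real (T - n) * G\<^sup>2) powr (p/2)"
    using st[unfolded e, unfolded c_def] .
  show ?case unfolding sumeq theq by (rule comb_ineq[OF IH st2])
qed

lemma young_norm:
  fixes \<theta> u :: "'a::real_inner" and W p q :: real
  assumes p: "1 < p" and q: "1/p + 1/q = 1" and W: "W > 0"
  shows "inner \<theta> u - W/p * norm \<theta> powr p \<le> norm u powr q / (W powr (q - 1) * q)"
proof -
  have q1: "q > 1"
  proof -
    have "1/q = 1 - 1/p" using q by simp
    moreover have "0 < 1 - 1/p" "1 - 1/p < 1" using p by auto
    ultimately have "0 < 1/q" "1/q < 1" by auto
    then show ?thesis by (simp add: divide_less_eq)
  qed
  have qp: "q / p = q - 1" using q p q1 by (simp add: field_simps)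
  define a where "a = W powr (1/p) * norm \<theta>"
  define b where "b = norm u / W powr (1/p)"
  have "inner \<theta> u \<le> norm \<theta> * norm u" by (rule norm_cauchy_schwarz)
  also have "\<dots> = a * b" using W by (simp add: a_def b_def)
  also have "\<dots> \<le> a powr p / p + b powr q / q"
    by (rule Youngs_inequality[OF p q1 q]) (use W in \<open>simp_all add: a_def b_def\<close>)
  also have "a powr p = W * norm \<theta> powr p"
  proof -
    have "a powr p = (W powr (1/p)) powr p * norm \<theta> powr p"
      unfolding a_def using W by (simp add: powr_mult)
    also have "(W powr (1/p)) powr p = W" using p W by (simp add: powr_powr)
    finally show ?thesis .
  qed
  also have "b powr q = norm u powr q / W powr (q - 1)"
  proof -
    have "b powr q = norm u powr q / (W powr (1/p)) powr q"
      unfolding b_def using W by (simp add: powr_divide)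
    also have "(W powr (1/p)) powr q = W powr (q/p)" by (simp add: powr_powr)
    also have "q/p = q - 1" by (rule qp)
    finally show ?thesis .
  qed
  finally have f: "inner \<theta> u \<le> W * norm \<theta> powr p / p + norm u powr q / W powr (q - 1) / q" .
  have e1: "W * norm \<theta> powr p / p = W/p * norm \<theta> powr p" by simp
  have e2: "norm u powr q / W powr (q - 1) / q = norm u powr q / (W powr (q - 1) * q)"
    by (simp add: divide_divide_eq_left)
  show ?thesis using f e1 e2 by linarith
qed

lemma p2_min:
  fixes x p q :: real
  assumes x: "x \<ge> 0" and p: "1 < p" "p \<le> 2" and q: "1/p + 1/q = 1"
  shows "1/2 + 1/2 * x powr 2 \<le> 1/p + 1/q * x powr q"
proof -
  have iq: "1/q = 1 - 1/p" using q by simp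
  have q2: "q \<ge> 2"
  proof -
    have "1/p \<ge> 1/2" using p by (simp add: field_simps)
    then have a: "1/q \<le> 1/2" using iq by linarith
    have "1/q > 0" using iq p by simp
    then have "q > 0" by simp
    then show ?thesis using a by (simp add: field_simps)
  qed
  have "(x powr q) powr (2/q) \<le> 1 powr (2/q) + (2/q) * 1 powr (2/q - 1) * (x powr q - 1)"
    using q2 by (intro tangent_powr) auto
  moreover have "(x powr q) powr (2/q) = x powr 2" using q2 by (simp add: powr_powr)
  ultimately have "x powr 2 \<le> 1 + (2/q) * (x powr q - 1)" by simp
  moreover have "(2/q)*(x powr q - 1) = 2*(1/q*(x powr q - 1))" by simp
  ultimately have h: "1/2 * x powr 2 \<le> 1/2 + 1/q * (x powr q - 1)" by linarith
  have "1/q * (x powr q - 1) = 1/q * x powr q - 1/q" by (simp add: algebra_simps)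
  then show ?thesis using h iq by linarith
qed

theorem corollary9:
  fixes W G p :: real and T :: nat
    and f :: "real \<Rightarrow> real" and B :: "'a::{real_inner, complete_space} \<Rightarrow> real"
    and ft :: "nat \<Rightarrow> real \<Rightarrow> real" and wstar :: "nat \<Rightarrow> 'a \<Rightarrow> 'a"
  assumes dim: "\<exists>x y::'a. independent {x, y} \<and> x \<noteq> y"
    and T: "T \<ge> 1" and G: "G > 0" and W: "W > 0" and p: "1 \<le> p" "p \<le> 2"
    and f_def: "\<And>x. f x = W / p * \<bar>x\<bar> powr p"
    and B_def: "\<And>\<theta>. B \<theta> = f (norm \<theta>)"
    and ft_def: "\<And>t x. ft t x = W / p * (x\<^sup>2 + real (T - t) * G\<^sup>2) powr (p / 2)"
    and wstar_def: "\<And>t \<theta>. wstar t \<theta> =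
          (deriv f (sqrt ((norm \<theta>)\<^sup>2 + G\<^sup>2 * real (T - t)))
            / sqrt ((norm \<theta>)\<^sup>2 + G\<^sup>2 * real (T - t))) *\<^sub>R \<theta>"
  shows
    \<comment> \<open>f_t(norm theta) is the conditional value V_t(theta)\<close>
    "(\<forall>t\<le>T. \<forall>\<theta>. cond_value B (cball 0 G) T t \<theta> = ft t (norm \<theta>))
     \<comment> \<open>the strategy is the gradient of V_t and is minimax optimal (attains the min in V_t)\<close>
     \<and> (\<forall>t<T. \<forall>\<theta>. (cond_value B (cball 0 G) T t has_derivative (\<lambda>h. inner (wstar t \<theta>) h)) (at \<theta>)
            \<and> (SUP g\<in>cball 0 G. inner g (wstar t \<theta>) + cond_value B (cball 0 G) T (Suc t) (\<theta> - g))
                = cond_value B (cball 0 G) T t \<theta>)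
     \<comment> \<open>regret bounds for p in (1,2]\<close>
     \<and> (1 < p \<longrightarrow> (\<forall>q. 1 / p + 1 / q = 1 \<longrightarrow>
          (\<forall>g u. (\<forall>t\<in>{1..T}. norm (g t) \<le> G) \<longrightarrow>
             regret T g (\<lambda>t. wstar (t - 1) (theta g (t - 1))) u
               \<le> norm u powr q / (W powr (q - 1) * q) + W / p * (G * sqrt (real T)) powr p)
          \<and> (W = (G * sqrt (real T)) powr (1 - p) \<longrightarrow> (\<forall>u::'a.
               norm u powr q / (W powr (q - 1) * q) + W / p * (G * sqrt (real T)) powr p
                 \<le> (1 / p + 1 / q * norm u powr q) * G * sqrt (real T)))))
     \<comment> \<open>p = 2 minimizes the bound over p in (1,2]\<close>
     \<and> (\<forall>u::'a. \<forall>p' q'. 1 < p' \<and> p' \<le> 2 \<and> 1 / p' + 1 / q' = 1 \<longrightarrow>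
          (1 / 2 + 1 / 2 * norm u powr 2) * G * sqrt (real T)
            \<le> (1 / p' + 1 / q' * norm u powr q') * G * sqrt (real T))
     \<comment> \<open>p = 1\<close>
     \<and> (p = 1 \<longrightarrow> (\<forall>g u. (\<forall>t\<in>{1..T}. norm (g t) \<le> G) \<longrightarrow> norm u \<le> W \<longrightarrow>
          regret T g (\<lambda>t. wstar (t - 1) (theta g (t - 1))) u \<le> W * G * sqrt (real T)))"
  proof -
  have p0: "p > 0" using p by simp
  have fdef: "f = (\<lambda>x. W/p * \<bar>x\<bar> powr p)" by (rule ext) (rule f_def)
  have Bd: "\<And>\<theta>. B \<theta> = W/p * \<bar>norm \<theta>\<bar> powr p" using B_def f_def by simp
  have CV: "\<And>t \<theta>. cond_value B (cball 0 G) T t \<theta> = W/p*((norm \<theta>)\<^sup>2 + real (T-t)*G\<^sup>2) powr (p/2)"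
    unfolding cond_value_def by (rule cv_formula[OF p W G dim Bd])
  have P1: "\<forall>t\<le>T. \<forall>\<theta>. cond_value B (cball 0 G) T t \<theta> = ft t (norm \<theta>)"
    by (simp add: CV ft_def)
  have Xeq: "(norm \<theta>)\<^sup>2 + G\<^sup>2 + real (T - Suc t) * G\<^sup>2 = (norm \<theta>)\<^sup>2 + real (T - t) * G\<^sup>2"
    if "t < T" for t and \<theta> :: 'a
    using real_diff_Suc[OF that] by (simp add: algebra_simps)
  have ws: "wstar t \<theta> = (W*((norm \<theta>)\<^sup>2+G\<^sup>2+real(T-Suc t)*G\<^sup>2) powr ((p-2)/2)) *\<^sub>R \<theta>"
    if t: "t < T" for t \<theta>
  proof -
    define X where "X = (norm \<theta>)\<^sup>2 + G\<^sup>2 * real (T - t)"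
    have X0: "X > 0" using t G by (simp add: X_def add_nonneg_pos)
    define s where "s = sqrt X"
    have s0: "s > 0" using X0 by (simp add: s_def)
    have d: "deriv f s = W * s powr (p - 1)" unfolding fdef by (rule deriv_f[OF p(1) s0])
    have "s powr (p - 2) = s powr ((p - 1) - 1)" by simp
    also have "\<dots> = s powr (p - 1) / s" using s0 by (simp only: powr_diff powr_one_gt_zero_iff) simp
    finally have "s powr (p - 1) / s = s powr (p - 2)" by simp
    moreover have "s powr (p - 2) = X powr ((p-2)/2)"
      using X0 by (simp add: s_def powr_half_sqrt[symmetric] powr_powr)
    ultimately have "deriv f s / s = W * X powr ((p-2)/2)" using d by (simp add: times_divide_eq_right[symmetric] del: times_divide_eq_right)
    moreover have "X = (norm \<theta>)\<^sup>2+G\<^sup>2+real(T-Suc t)*G\<^sup>2" using Xeq[OF t, of \<theta>] by (simp add: X_def mult.commute)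
    ultimately show ?thesis using wstar_def[of t \<theta>] by (simp add: s_def X_def add.assoc)
  qed
  have P2: "\<forall>t<T. \<forall>\<theta>. (cond_value B (cball 0 G) T t has_derivative (\<lambda>h. inner (wstar t \<theta>) h)) (at \<theta>)
            \<and> (SUP g\<in>cball 0 G. inner g (wstar t \<theta>) + cond_value B (cball 0 G) T (Suc t) (\<theta> - g))
                = cond_value B (cball 0 G) T t \<theta>"
  proof (intro allI impI conjI)
    fix t \<theta> assume t: "t < T"
    have fe: "cond_value B (cball 0 G) T t = (\<lambda>\<theta>. W/p*((norm \<theta>)\<^sup>2 + real (T-t)*G\<^sup>2) powr (p/2))"
      by (rule ext) (rule CV)
    have c0: "real (T-t)*G\<^sup>2 > 0" using t G by simp
    have wse: "wstar t \<theta> = (W*((norm \<theta>)\<^sup>2 + real (T-t)*G\<^sup>2) powr ((p-2)/2)) *\<^sub>R \<theta>"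
      using ws[OF t, of \<theta>] Xeq[OF t, of \<theta>] by simp
    show "(cond_value B (cball 0 G) T t has_derivative (\<lambda>h. inner (wstar t \<theta>) h)) (at \<theta>)"
      unfolding fe wse by (rule has_deriv_F[OF c0 p(1)])
    have "(SUP g\<in>cball 0 G. inner g (wstar t \<theta>) + cond_value B (cball 0 G) T (Suc t) (\<theta> - g))
        = W/p * ((norm \<theta>)\<^sup>2 + G\<^sup>2 + real (T - Suc t) * G\<^sup>2) powr (p/2)"
      unfolding ws[OF t] by (rule one_step(1)[OF p W G _ dim]) (use G CV in auto)
    also have "\<dots> = cond_value B (cball 0 G) T t \<theta>" unfolding CV Xeq[OF t] ..
    finally show "(SUP g\<in>cball 0 G. inner g (wstar t \<theta>) + cond_value B (cball 0 G) T (Suc t) (\<theta> - g))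
        = cond_value B (cball 0 G) T t \<theta>" .
  qed
  define A where "A = G * sqrt (real T)"
  have A0: "A > 0" using G T by (simp add: A_def)
  have AT: "A\<^sup>2 = real T * G\<^sup>2" using T by (simp add: A_def power_mult_distrib)
  have REG: "regret T g (\<lambda>t. wstar (t - 1) (theta g (t - 1))) u
      \<le> W/p * A powr p - W/p * norm (theta g T) powr p + inner (theta g T) u"
    if gG: "\<forall>t\<in>{1..T}. norm (g t) \<le> G" for g :: "nat \<Rightarrow> 'a" and u :: 'a
  proof -
    have tel: "(\<Sum>t=1..T. inner (g t) (wstar (t-1) (theta g (t-1))))
     \<le> W/p*((norm (0::'a))\<^sup>2+real T*G\<^sup>2) powr (p/2) - W/p*((norm (theta g T))\<^sup>2+real (T-T)*G\<^sup>2) powr (p/2)"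
      by (rule telescope[OF p W G gG ws]) auto
    have e1: "(norm (0::'a))\<^sup>2+real T*G\<^sup>2 = A\<^sup>2" using AT by simp
    have e2: "(norm (theta g T))\<^sup>2+real (T-T)*G\<^sup>2 = (norm (theta g T))\<^sup>2" by simp
    have tel2: "(\<Sum>t=1..T. inner (g t) (wstar (t-1) (theta g (t-1))))
        \<le> W/p * A powr p - W/p * norm (theta g T) powr p"
      using tel unfolding e1 e2 sq_powr_half[OF less_imp_le[OF A0] p0] sq_powr_half[OF norm_ge_zero p0] .
    have "regret T g (\<lambda>t. wstar (t - 1) (theta g (t - 1))) u
        = (\<Sum>t=1..T. inner (g t) (wstar (t-1) (theta g (t-1)))) - (\<Sum>t=1..T. inner (g t) u)"
      by (simp add: regret_def inner_diff_right sum_subtractf)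
    also have "(\<Sum>t=1..T. inner (g t) u) = - inner (theta g T) u"
      by (simp add: theta_def inner_sum_left)
    finally show ?thesis using tel2 by linarith
  qed
  have P3: "1 < p \<longrightarrow> (\<forall>q. 1 / p + 1 / q = 1 \<longrightarrow>
          (\<forall>g u. (\<forall>t\<in>{1..T}. norm (g t) \<le> G) \<longrightarrow>
             regret T g (\<lambda>t. wstar (t - 1) (theta g (t - 1))) u
               \<le> norm u powr q / (W powr (q - 1) * q) + W / p * (G * sqrt (real T)) powr p)
          \<and> (W = (G * sqrt (real T)) powr (1 - p) \<longrightarrow> (\<forall>u::'a.
               norm u powr q / (W powr (q - 1) * q) + W / p * (G * sqrt (real T)) powr p
                 \<le> (1 / p + 1 / q * norm u powr q) * G * sqrt (real T))))"
  proof (intro impI allI conjI)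
    fix q :: real assume p1: "1 < p" and q: "1/p + 1/q = 1"
    fix g :: "nat \<Rightarrow> 'a" and u :: 'a assume gG: "\<forall>t\<in>{1..T}. norm (g t) \<le> G"
    show "regret T g (\<lambda>t. wstar (t - 1) (theta g (t - 1))) u
               \<le> norm u powr q / (W powr (q - 1) * q) + W / p * (G * sqrt (real T)) powr p"
      using REG[OF gG, of u] young_norm[OF p1 q W, of "theta g T" u] by (simp add: A_def)
  next
    fix q :: real and u :: 'a assume p1: "1 < p" and q: "1/p + 1/q = 1"
      and Wd: "W = (G * sqrt (real T)) powr (1 - p)"
    have WA: "W = A powr (1 - p)" using Wd by (simp add: A_def)
    have q0: "q \<noteq> 0" using q p1 by auto
    have pq: "p + q = p * q" using q p0 q0 by (simp add: field_simps)
    have "(1 - p) * (q - 1) = (p + q) - p * q - 1" by (simp add: algebra_simps)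
    then have ex: "(1 - p) * (q - 1) = -1" using pq by linarith
    have "W powr (q - 1) = (A powr (1 - p)) powr (q - 1)" using WA by simp
    also have "\<dots> = A powr (-1)" by (simp only: powr_powr ex)
    also have "\<dots> = inverse A" using A0 by (simp add: powr_minus)
    finally have Wq: "W powr (q - 1) = inverse A" .
    have WAp: "W * A powr p = A"
    proof -
      have "W * A powr p = A powr (1 - p) * A powr p" using WA by simp
      also have "\<dots> = A powr (1 - p + p)" by (simp only: powr_add)
      also have "\<dots> = A" using A0 by simp
      finally show ?thesis .
    qed
    have t1: "norm u powr q / (W powr (q - 1) * q) = norm u powr q * A / q"
      using A0 q0 by (simp add: Wq field_simps)
    have t2: "W / p * A powr p = A / p" using WAp by (metis times_divide_eq_left mult.commute)
    have "norm u powr q / (W powr (q - 1) * q) + W / p * A powr p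
        = (1 / p + 1 / q * norm u powr q) * A"
      unfolding t1 t2 by (simp add: algebra_simps)
    then show "norm u powr q / (W powr (q - 1) * q) + W / p * (G * sqrt (real T)) powr p
                 \<le> (1 / p + 1 / q * norm u powr q) * G * sqrt (real T)"
      by (simp add: A_def mult.assoc)
  qed
  have P4: "\<forall>u::'a. \<forall>p' q'. 1 < p' \<and> p' \<le> 2 \<and> 1 / p' + 1 / q' = 1 \<longrightarrow>
          (1 / 2 + 1 / 2 * norm u powr 2) * G * sqrt (real T)
            \<le> (1 / p' + 1 / q' * norm u powr q') * G * sqrt (real T)"
  proof (intro allI impI)
    fix u :: 'a and p' q' :: real assume h: "1 < p' \<and> p' \<le> 2 \<and> 1 / p' + 1 / q' = 1"
    have "1 / 2 + 1 / 2 * norm u powr 2 \<le> 1 / p' + 1 / q' * norm u powr q'"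
      using h by (intro p2_min) auto
    then have "(1 / 2 + 1 / 2 * norm u powr 2) * A \<le> (1 / p' + 1 / q' * norm u powr q') * A"
      using A0 by (intro mult_right_mono) auto
    then show "(1 / 2 + 1 / 2 * norm u powr 2) * G * sqrt (real T)
            \<le> (1 / p' + 1 / q' * norm u powr q') * G * sqrt (real T)"
      by (simp add: A_def mult.assoc)
  qed
  have P5: "p = 1 \<longrightarrow> (\<forall>g u. (\<forall>t\<in>{1..T}. norm (g t) \<le> G) \<longrightarrow> norm u \<le> W \<longrightarrow>
          regret T g (\<lambda>t. wstar (t - 1) (theta g (t - 1))) u \<le> W * G * sqrt (real T))"
  proof (intro impI allI)
    fix g :: "nat \<Rightarrow> 'a" and u :: 'a assume p1: "p = 1" and gG: "\<forall>t\<in>{1..T}. norm (g t) \<le> G" and uW: "norm u \<le> W"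
    have r: "regret T g (\<lambda>t. wstar (t - 1) (theta g (t - 1))) u
      \<le> W * A - W * norm (theta g T) + inner (theta g T) u"
      using REG[OF gG, of u] A0 by (simp add: p1)
    have "inner (theta g T) u \<le> norm (theta g T) * norm u" by (rule norm_cauchy_schwarz)
    also have "\<dots> \<le> norm (theta g T) * W" using uW by (intro mult_left_mono) auto
    finally have "inner (theta g T) u \<le> W * norm (theta g T)" by (simp add: mult.commute)
    then show "regret T g (\<lambda>t. wstar (t - 1) (theta g (t - 1))) u \<le> W * G * sqrt (real T)"
      using r by (simp add: A_def mult.assoc)
  qed
  show ?thesis using P1 P2 P3 P4 P5 by blast
qed

end
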